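(* Let $(\Omega,\Sigma,\mu;\phi)$ be a measure preserving dynamical system with associated Perron-Frobenius operator $P$ on $L^1(\Omega,\Sigma,\mu)$. Then the following are equivalent: (i) The sequence $(P^n)_{n\in\mathbb{N}}$ converges with respect to the strong operator topology. (ii) For each $B\in\Sigma$ with $\mu(B)>0$ there exist $D\in\Sigma$ with $\mu(D)>0$ and a constant $c>0$ such that \[\liminf_{n\to\infty}\inf_{A\in\Sigma}\bigl(\mu(\phi^{-n}(A)\cap B)-c\,\mu(D\cap A)\bigr)\ge 0.\]
   Context: A measure preserving dynamical system $(\Omega,\Sigma,\mu;\phi)$ is a probability space with a measurable map $\phi\colon\Omega\to\Omega$ such that $\mu(\phi^{-1}(A))=\mu(A)$ for all $A\in\Sigma$. The Perron-Frobenius operator $P$ is the unique linear positive operator on $L^1(\Omega,\Sigma,\mu)$ with $\int_A Pf\,d\mu=\int_{\phi^{-1}(A)}f\,d\mu$ for all $f\in L^1$, $A\in\Sigma$. *)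

theory Defs
  imports "HOL-Probability.Probability"
begin

definition mpds :: "'a measure \<Rightarrow> ('a \<Rightarrow> 'a) \<Rightarrow> bool" where
  "mpds M \<phi> \<longleftrightarrow> prob_space M \<and> \<phi> \<in> measurable M M \<and>
     (\<forall>A\<in>sets M. measure M (\<phi> -` A \<inter> space M) = measure M A)"

text \<open>P is (a representative of) the Perron-Frobenius operator on L1: it maps
integrable functions to integrable functions with the defining identity
int_A Pf = int_{phi^-1 A} f. This determines Pf uniquely up to a.e. equality.\<close>
definition perron_frobenius ::
  "'a measure \<Rightarrow> ('a \<Rightarrow> 'a) \<Rightarrow> (('a \<Rightarrow> real) \<Rightarrow> ('a \<Rightarrow> real)) \<Rightarrow> bool" where
  "perron_frobenius M \<phi> P \<longleftrightarrow>
     (\<forall>f. integrable M f \<longrightarrow> integrable M (P f) \<and>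
        (\<forall>A\<in>sets M. (\<integral>x\<in>A. P f x \<partial>M) = (\<integral>x\<in>(\<phi> -` A \<inter> space M). f x \<partial>M)))"

definition sot_convergent_L1 :: "'a measure \<Rightarrow> (('a \<Rightarrow> real) \<Rightarrow> ('a \<Rightarrow> real)) \<Rightarrow> bool" where
  "sot_convergent_L1 M P \<longleftrightarrow>
     (\<forall>f. integrable M f \<longrightarrow> (\<exists>g. integrable M g \<and>
        (\<lambda>n. \<integral>x. \<bar>(P ^^ n) f x - g x\<bar> \<partial>M) \<longlonglongrightarrow> 0))"

end

theory Submission
  imports Defs
begin

locale pfsys =
  fixes M :: "'a measure" and \<phi> :: "'a \<Rightarrow> 'a" and P :: "('a \<Rightarrow> real) \<Rightarrow> ('a \<Rightarrow> real)"
  assumes mp: "mpds M \<phi>" and pf: "perron_frobenius M \<phi> P"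
begin

sublocale prob_space M using mp by (simp add: mpds_def)

lemma phi_meas[measurable]: "\<phi> \<in> M \<rightarrow>\<^sub>M M"
  using mp by (simp add: mpds_def)

lemma phin_meas[measurable]: "(\<phi> ^^ n) \<in> M \<rightarrow>\<^sub>M M"
proof (induction n)
  case 0 then show ?case by simp
next
  case (Suc n) then show ?case by (simp add: measurable_comp)
qed

lemma phin_space: "x \<in> space M \<Longrightarrow> (\<phi> ^^ n) x \<in> space M"
  using measurable_space[OF phin_meas] by blast

lemma distr_phi: "distr M M \<phi> = M"
proof (rule measure_eqI)
  fix A assume A: "A \<in> sets (distr M M \<phi>)"
  then have A': "A \<in> sets M" by simp
  have "emeasure (distr M M \<phi>) A = emeasure M (\<phi> -` A \<inter> space M)"
    using A' by (simp add: emeasure_distr)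
  also have "\<dots> = measure M (\<phi> -` A \<inter> space M)" by (simp add: emeasure_eq_measure)
  also have "\<dots> = measure M A" using mp A' by (simp add: mpds_def)
  finally show "emeasure (distr M M \<phi>) A = emeasure M A" by (simp add: emeasure_eq_measure)
qed simp

lemma distr_phin: "distr M M (\<phi> ^^ n) = M"
proof (induction n)
  case 0 then show ?case by (simp add: distr_id2)
next
  case (Suc n)
  have "distr M M (\<phi> ^^ Suc n) = distr M M ((\<phi> ^^ n) \<circ> \<phi>)" by (simp only: funpow_Suc_right)
  also have "\<dots> = distr (distr M M \<phi>) M (\<phi> ^^ n)"
    by (subst distr_distr) auto
  also have "\<dots> = M" using Suc distr_phi by simp
  finally show ?case .
qed

lemma measure_phin: "A \<in> sets M \<Longrightarrow> measure M ((\<phi> ^^ n) -` A \<inter> space M) = measure M A"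
  by (metis distr_phin measure_distr phin_meas)

lemma integral_phin:
  fixes w :: "'a \<Rightarrow> real"
  assumes [measurable]: "w \<in> borel_measurable M"
  shows "(\<integral>x. w ((\<phi> ^^ n) x) \<partial>M) = (\<integral>x. w x \<partial>M)"
  by (metis assms distr_phin integral_distr phin_meas)

lemma integrable_phin:
  fixes w :: "'a \<Rightarrow> real"
  assumes [measurable]: "integrable M w"
  shows "integrable M (\<lambda>x. w ((\<phi> ^^ n) x))"
  by (metis assms borel_measurable_integrable distr_phin integrable_distr_eq phin_meas)

lemma AE_phin:
  assumes "AE x in M. Q x"
  shows "AE x in M. Q ((\<phi> ^^ n) x)"
proof -
  obtain N where N: "{x \<in> space M. \<not> Q x} \<subseteq> N" "N \<in> null_sets M"
    using assms by (auto elim!: AE_E)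
  have "(\<phi> ^^ n) -` N \<inter> space M \<in> null_sets M"
    using N(2) measure_phin[of N n]
    by (simp add: null_sets_def emeasure_eq_measure measurable_sets)
      (metis measurable_sets phin_meas)
  moreover have "{x \<in> space M. \<not> Q ((\<phi> ^^ n) x)} \<subseteq> (\<phi> ^^ n) -` N \<inter> space M"
    using N(1) phin_space by blast
  ultimately show ?thesis by (auto intro: AE_I')
qed


lemma pf_step:
  assumes "integrable M f"
  shows "integrable M (P f)" "A \<in> sets M \<Longrightarrow> (\<integral>x. indicator A x * P f x \<partial>M) = (\<integral>x. indicator A (\<phi> x) * f x \<partial>M)"
proof -
  show "integrable M (P f)" using pf assms by (simp add: perron_frobenius_def)
  assume A: "A \<in> sets M"
  have "(\<integral>x. indicator A x * P f x \<partial>M) = (\<integral>x. indicator (\<phi> -` A \<inter> space M) x * f x \<partial>M)"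
    using pf assms A by (simp add: perron_frobenius_def set_lebesgue_integral_def)
  also have "\<dots> = (\<integral>x. indicator A (\<phi> x) * f x \<partial>M)"
    by (rule Bochner_Integration.integral_cong) (auto simp: indicator_def)
  finally show "(\<integral>x. indicator A x * P f x \<partial>M) = (\<integral>x. indicator A (\<phi> x) * f x \<partial>M)" .
qed

lemma Pn_int: "integrable M f \<Longrightarrow> integrable M ((P ^^ n) f)"
  by (induction n) (auto intro: pf_step)

lemma Pn_ind:
  assumes f: "integrable M f" and A: "A \<in> sets M"
  shows "(\<integral>x. indicator A x * (P ^^ n) f x \<partial>M) = (\<integral>x. indicator A ((\<phi> ^^ n) x) * f x \<partial>M)"
  using A
proof (induction n arbitrary: A)
  case 0 then show ?case by simp
next
  case (Suc n)
  have A': "\<phi> -` A \<inter> space M \<in> sets M" using Suc.prems by measurable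
  have "(\<integral>x. indicator A x * (P ^^ Suc n) f x \<partial>M) = (\<integral>x. indicator A (\<phi> x) * (P ^^ n) f x \<partial>M)"
    using pf_step(2)[OF Pn_int[OF f] Suc.prems] by simp
  also have "\<dots> = (\<integral>x. indicator (\<phi> -` A \<inter> space M) x * (P ^^ n) f x \<partial>M)"
    by (rule Bochner_Integration.integral_cong) (auto simp: indicator_def)
  also have "\<dots> = (\<integral>x. indicator (\<phi> -` A \<inter> space M) ((\<phi> ^^ n) x) * f x \<partial>M)"
    using Suc.IH[OF A'] .
  also have "\<dots> = (\<integral>x. indicator A ((\<phi> ^^ Suc n) x) * f x \<partial>M)"
    by (rule Bochner_Integration.integral_cong) (auto simp: indicator_def phin_space)
  finally show ?case .
qed

lemma integrable_ind:
  fixes u :: "'a \<Rightarrow> real"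
  shows "integrable M u \<Longrightarrow> A \<in> sets M \<Longrightarrow> integrable M (\<lambda>x. indicator A x * u x)"
  using integrable_mult_indicator[of A M u] by simp

lemma nonneg_from_sets:
  fixes u :: "'a \<Rightarrow> real"
  assumes u: "integrable M u" and h: "\<And>A. A \<in> sets M \<Longrightarrow> (\<integral>x. indicator A x * u x \<partial>M) \<ge> 0"
  shows "AE x in M. u x \<ge> 0"
proof -
  have [measurable]: "u \<in> borel_measurable M" using u by simp
  define A where "A = {x \<in> space M. u x < 0}"
  have A[measurable]: "A \<in> sets M" unfolding A_def by measurable
  have i: "integrable M (\<lambda>x. indicator A x * (- u x))"
    using integrable_mult_indicator[OF A, of "\<lambda>x. - u x"] u by simp
  have "(\<integral>x. indicator A x * (- u x) \<partial>M) = - (\<integral>x. indicator A x * u x \<partial>M)"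
    by simp
  also have "\<dots> \<le> 0" using h[OF A] by simp
  finally have le: "(\<integral>x. indicator A x * (- u x) \<partial>M) \<le> 0" .
  have nn: "\<And>x. 0 \<le> indicator A x * (- u x)"
    unfolding A_def indicator_def by simp
  have ge: "(\<integral>x. indicator A x * (- u x) \<partial>M) \<ge> 0"
    by (rule Bochner_Integration.integral_nonneg) (rule nn)
  have "AE x in M. indicator A x * (- u x) = 0"
    using integral_nonneg_eq_0_iff_AE[OF i] le ge nn by simp
  then show ?thesis
  proof (rule AE_mp, intro AE_I2 impI)
    fix x assume x: "x \<in> space M" "indicator A x * (- u x) = 0"
    show "u x \<ge> 0"
    proof (rule ccontr)
      assume "\<not> u x \<ge> 0"
      then have "x \<in> A" using x(1) by (simp add: A_def)
      then show False using x(2) \<open>\<not> u x \<ge> 0\<close> by simp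
    qed
  qed
qed

lemma eq_from_sets:
  fixes u w :: "'a \<Rightarrow> real"
  assumes u: "integrable M u" and w: "integrable M w"
    and h: "\<And>A. A \<in> sets M \<Longrightarrow> (\<integral>x. indicator A x * u x \<partial>M) = (\<integral>x. indicator A x * w x \<partial>M)"
  shows "AE x in M. u x = w x"
proof -
  have d: "(\<integral>x. indicator A x * (a x - b x) \<partial>M) = 0"
    if "integrable M a" "integrable M b" "A \<in> sets M"
      "(\<integral>x. indicator A x * a x \<partial>M) = (\<integral>x. indicator A x * b x \<partial>M)" for a b :: "'a \<Rightarrow> real" and A
  proof -
    have "(\<integral>x. indicator A x * (a x - b x) \<partial>M) = (\<integral>x. indicator A x * a x - indicator A x * b x \<partial>M)"
      by (simp add: right_diff_distrib)
    also have "\<dots> = (\<integral>x. indicator A x * a x \<partial>M) - (\<integral>x. indicator A x * b x \<partial>M)"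
      using that by (intro Bochner_Integration.integral_diff integrable_ind)
    finally show ?thesis using that by simp
  qed
  have "AE x in M. u x - w x \<ge> 0"
    using u w h d[of u w] by (intro nonneg_from_sets) auto
  moreover have "AE x in M. w x - u x \<ge> 0"
    using u w h d[of w u] by (intro nonneg_from_sets) auto
  ultimately show ?thesis by eventually_elim simp
qed


lemma int_indphi:
  fixes f :: "'a \<Rightarrow> real"
  assumes f: "integrable M f" and A: "A \<in> sets M"
  shows "integrable M (\<lambda>x. indicator A ((\<phi> ^^ n) x) * f x)"
proof -
  have A': "(\<phi> ^^ n) -` A \<inter> space M \<in> sets M" using A by measurable
  have "integrable M (\<lambda>x. indicator ((\<phi> ^^ n) -` A \<inter> space M) x * f x)"
    using integrable_ind[OF f A'] .
  then show ?thesis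
    by (rule Bochner_Integration.integrable_cong[THEN iffD1, rotated -1]) (auto simp: indicator_def)
qed

lemma int_ind_const:
  assumes A: "A \<in> sets M"
  shows "(\<integral>x. indicator A ((\<phi> ^^ n) x) * (K::real) \<partial>M) = (\<integral>x. indicator A x * K \<partial>M)"
  using integral_phin[of "\<lambda>x. indicator A x * K" n] A by simp

lemma Pn_nonneg:
  assumes f: "integrable M f" and nn: "AE x in M. f x \<ge> 0"
  shows "AE x in M. (P ^^ n) f x \<ge> 0"
proof (rule nonneg_from_sets[OF Pn_int[OF f]])
  fix A assume A: "A \<in> sets M"
  have "0 \<le> (\<integral>x. indicator A ((\<phi> ^^ n) x) * f x \<partial>M)"
    using nn by (intro integral_nonneg_AE) (auto elim: AE_mp)
  then show "0 \<le> (\<integral>x. indicator A x * (P ^^ n) f x \<partial>M)"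
    using Pn_ind[OF f A] by simp
qed

lemma Pn_le:
  assumes f: "integrable M f" and le: "AE x in M. f x \<le> K"
  shows "AE x in M. (P ^^ n) f x \<le> K"
proof -
  have "AE x in M. K - (P ^^ n) f x \<ge> 0"
  proof (rule nonneg_from_sets)
    show "integrable M (\<lambda>x. K - (P ^^ n) f x)" using Pn_int[OF f] by simp
    fix A assume A: "A \<in> sets M"
    have i1: "integrable M (\<lambda>x. indicator A x * K)" using integrable_ind[of "\<lambda>_. K" A] A by simp
    have i2: "integrable M (\<lambda>x. indicator A x * (P ^^ n) f x)" using integrable_ind[OF Pn_int[OF f] A] .
    have i3: "integrable M (\<lambda>x. indicator A ((\<phi> ^^ n) x) * K)"
      using int_indphi[of "\<lambda>x. K" A n] A by simp
    have i4: "integrable M (\<lambda>x. indicator A ((\<phi> ^^ n) x) * f x)" using int_indphi[OF f A] .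
    have "(\<integral>x. indicator A x * (K - (P ^^ n) f x) \<partial>M)
        = (\<integral>x. indicator A x * K \<partial>M) - (\<integral>x. indicator A x * (P ^^ n) f x \<partial>M)"
      using i1 i2 by (simp add: right_diff_distrib)
    also have "\<dots> = (\<integral>x. indicator A ((\<phi> ^^ n) x) * K \<partial>M) - (\<integral>x. indicator A ((\<phi> ^^ n) x) * f x \<partial>M)"
      by (simp only: int_ind_const[OF A] Pn_ind[OF f A])
    also have "\<dots> = (\<integral>x. indicator A ((\<phi> ^^ n) x) * (K - f x) \<partial>M)"
      using i3 i4 by (simp add: right_diff_distrib)
    also have "\<dots> \<ge> 0"
      using le by (intro integral_nonneg_AE) (auto elim: AE_mp)
    finally show "0 \<le> (\<integral>x. indicator A x * (K - (P ^^ n) f x) \<partial>M)" .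
  qed
  then show ?thesis by eventually_elim simp
qed

lemma Pn_diff:
  assumes f: "integrable M f" and g: "integrable M g"
  shows "AE x in M. (P ^^ n) (\<lambda>x. f x - g x) x = (P ^^ n) f x - (P ^^ n) g x"
proof (rule eq_from_sets)
  have fg: "integrable M (\<lambda>x. f x - g x)" using f g by simp
  show "integrable M ((P ^^ n) (\<lambda>x. f x - g x))" using Pn_int[OF fg] .
  show "integrable M (\<lambda>x. (P ^^ n) f x - (P ^^ n) g x)" using Pn_int[OF f] Pn_int[OF g] by simp
  fix A assume A: "A \<in> sets M"
  have "(\<integral>x. indicator A x * (P ^^ n) (\<lambda>x. f x - g x) x \<partial>M) = (\<integral>x. indicator A ((\<phi> ^^ n) x) * (f x - g x) \<partial>M)"
    using Pn_ind[OF fg A] .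
  also have "\<dots> = (\<integral>x. indicator A ((\<phi> ^^ n) x) * f x \<partial>M) - (\<integral>x. indicator A ((\<phi> ^^ n) x) * g x \<partial>M)"
    using int_indphi[OF f A, of n] int_indphi[OF g A, of n] by (simp add: right_diff_distrib)
  also have "\<dots> = (\<integral>x. indicator A x * (P ^^ n) f x \<partial>M) - (\<integral>x. indicator A x * (P ^^ n) g x \<partial>M)"
    using Pn_ind[OF f A] Pn_ind[OF g A] by simp
  also have "\<dots> = (\<integral>x. indicator A x * ((P ^^ n) f x - (P ^^ n) g x) \<partial>M)"
    using integrable_ind[OF Pn_int[OF f] A, of n] integrable_ind[OF Pn_int[OF g] A, of n]
    by (simp add: right_diff_distrib)
  finally show "(\<integral>x. indicator A x * (P ^^ n) (\<lambda>x. f x - g x) x \<partial>M) = (\<integral>x. indicator A x * ((P ^^ n) f x - (P ^^ n) g x) \<partial>M)" .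
qed

lemma Pn_cong:
  assumes f: "integrable M f" and g: "integrable M g" and fg: "AE x in M. f x = g x"
  shows "AE x in M. (P ^^ n) f x = (P ^^ n) g x"
proof (rule eq_from_sets[OF Pn_int[OF f] Pn_int[OF g]])
  fix A assume A: "A \<in> sets M"
  have [measurable]: "f \<in> borel_measurable M" "g \<in> borel_measurable M" using f g by auto
  have "(\<integral>x. indicator A ((\<phi> ^^ n) x) * f x \<partial>M) = (\<integral>x. indicator A ((\<phi> ^^ n) x) * g x \<partial>M)"
    using A fg by (intro integral_cong_AE) (auto elim: AE_mp)
  then show "(\<integral>x. indicator A x * (P ^^ n) f x \<partial>M) = (\<integral>x. indicator A x * (P ^^ n) g x \<partial>M)"
    using Pn_ind[OF f A] Pn_ind[OF g A] by simp
qed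

end
context pfsys begin

lemma Pn_contr:
  assumes f: "integrable M f" and g: "integrable M g"
  shows "(\<integral>x. \<bar>(P ^^ n) f x - (P ^^ n) g x\<bar> \<partial>M) \<le> (\<integral>x. \<bar>f x - g x\<bar> \<partial>M)"
proof -
  define d where "d = (\<lambda>x. f x - g x)"
  have d: "integrable M d" using f g by (simp add: d_def)
  define u where "u = (P ^^ n) d"
  have u: "integrable M u" using Pn_int[OF d] by (simp add: u_def)
  have [measurable]: "u \<in> borel_measurable M" "d \<in> borel_measurable M" using u d by auto
  define A where "A = {x \<in> space M. u x \<ge> 0}"
  define A' where "A' = {x \<in> space M. u x < 0}"
  have A1[measurable]: "A \<in> sets M" unfolding A_def by measurable
  have A2[measurable]: "A' \<in> sets M" unfolding A'_def by measurable
  note A = A1 A2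
  have "(\<integral>x. \<bar>(P ^^ n) f x - (P ^^ n) g x\<bar> \<partial>M) = (\<integral>x. \<bar>u x\<bar> \<partial>M)"
  proof -
    have [measurable]: "(P ^^ n) f \<in> borel_measurable M" "(P ^^ n) g \<in> borel_measurable M"
      using Pn_int[OF f] Pn_int[OF g] by auto
    have "AE x in M. (P ^^ n) f x - (P ^^ n) g x = u x"
      using Pn_diff[OF f g, of n] unfolding u_def d_def by (auto elim: AE_mp)
    then show ?thesis by (intro integral_cong_AE) (auto elim: AE_mp)
  qed
  also have "\<dots> = (\<integral>x. indicator A x * u x - indicator A' x * u x \<partial>M)"
    by (rule Bochner_Integration.integral_cong) (auto simp: A_def A'_def indicator_def)
  also have "\<dots> = (\<integral>x. indicator A x * u x \<partial>M) - (\<integral>x. indicator A' x * u x \<partial>M)"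
    using integrable_ind[OF u A(1)] integrable_ind[OF u A(2)] by simp
  also have "\<dots> = (\<integral>x. indicator A ((\<phi> ^^ n) x) * d x \<partial>M) - (\<integral>x. indicator A' ((\<phi> ^^ n) x) * d x \<partial>M)"
    unfolding u_def by (simp only: Pn_ind[OF d A(1)] Pn_ind[OF d A(2)])
  also have "\<dots> = (\<integral>x. indicator A ((\<phi> ^^ n) x) * d x - indicator A' ((\<phi> ^^ n) x) * d x \<partial>M)"
    using int_indphi[OF d A(1), of n] int_indphi[OF d A(2), of n] by simp
  also have "\<dots> \<le> (\<integral>x. \<bar>d x\<bar> \<partial>M)"
    using int_indphi[OF d A(1), of n] int_indphi[OF d A(2), of n] d
    by (intro integral_mono) (auto simp: indicator_def)
  finally show ?thesis by (simp add: d_def)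
qed

lemma dual:
  fixes u v :: "'a \<Rightarrow> real"
  assumes u: "integrable M u" and nn: "AE x in M. u x \<ge> 0" and v[measurable]: "v \<in> borel_measurable M"
  shows "(\<integral>x. (P ^^ n) u x * v x \<partial>M) = (\<integral>x. u x * v ((\<phi> ^^ n) x) \<partial>M)"
proof -
  have Pu: "integrable M ((P ^^ n) u)" using Pn_int[OF u] .
  have Pnn: "AE x in M. (P ^^ n) u x \<ge> 0" using Pn_nonneg[OF u nn] .
  have [measurable]: "u \<in> borel_measurable M" "(P ^^ n) u \<in> borel_measurable M" using u Pu by auto
  have phm: "(\<phi> ^^ n) \<in> density M (\<lambda>x. ennreal (u x)) \<rightarrow>\<^sub>M M"
    by (simp add: measurable_cong_sets[OF sets_density refl])
  have eq: "density M (\<lambda>x. ennreal ((P ^^ n) u x)) = distr (density M (\<lambda>x. ennreal (u x))) M (\<phi> ^^ n)"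
  proof (rule measure_eqI)
    show "sets (density M (\<lambda>x. ennreal ((P ^^ n) u x))) = sets (distr (density M (\<lambda>x. ennreal (u x))) M (\<phi> ^^ n))"
      by simp
    fix A assume "A \<in> sets (density M (\<lambda>x. ennreal ((P ^^ n) u x)))"
    then have A[measurable]: "A \<in> sets M" by simp
    have A'[measurable]: "(\<phi> ^^ n) -` A \<inter> space M \<in> sets M" by measurable
    have "emeasure (density M (\<lambda>x. ennreal ((P ^^ n) u x))) A = (\<integral>\<^sup>+x. ennreal ((P ^^ n) u x) * indicator A x \<partial>M)"
      by (simp add: emeasure_density)
    also have "\<dots> = (\<integral>\<^sup>+x. ennreal (indicator A x * (P ^^ n) u x) \<partial>M)"
      by (rule nn_integral_cong) (auto simp: indicator_def)
    also have "\<dots> = ennreal (\<integral>x. indicator A x * (P ^^ n) u x \<partial>M)"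
      using integrable_ind[OF Pu A] Pnn
      by (intro nn_integral_eq_integral) (auto elim: AE_mp simp: indicator_def)
    also have "\<dots> = ennreal (\<integral>x. indicator A ((\<phi> ^^ n) x) * u x \<partial>M)"
      using Pn_ind[OF u A] by simp
    also have "\<dots> = (\<integral>\<^sup>+x. ennreal (indicator A ((\<phi> ^^ n) x) * u x) \<partial>M)"
      using int_indphi[OF u A, of n] nn
      by (intro nn_integral_eq_integral[symmetric]) (auto elim: AE_mp simp: indicator_def)
    also have "\<dots> = (\<integral>\<^sup>+x. ennreal (u x) * indicator ((\<phi> ^^ n) -` A \<inter> space M) x \<partial>M)"
      by (rule nn_integral_cong) (auto simp: indicator_def)
    also have "\<dots> = emeasure (density M (\<lambda>x. ennreal (u x))) ((\<phi> ^^ n) -` A \<inter> space M)"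
      by (simp add: emeasure_density)
    also have "\<dots> = emeasure (distr (density M (\<lambda>x. ennreal (u x))) M (\<phi> ^^ n)) A"
      using phm by (simp add: emeasure_distr)
    finally show "emeasure (density M (\<lambda>x. ennreal ((P ^^ n) u x))) A = emeasure (distr (density M (\<lambda>x. ennreal (u x))) M (\<phi> ^^ n)) A" .
  qed
  have "(\<integral>x. (P ^^ n) u x * v x \<partial>M) = integral\<^sup>L (density M (\<lambda>x. ennreal ((P ^^ n) u x))) v"
    using integral_density[of v M "(P ^^ n) u"] Pnn by simp
  also have "\<dots> = integral\<^sup>L (distr (density M (\<lambda>x. ennreal (u x))) M (\<phi> ^^ n)) v"
    using eq by simp
  also have "\<dots> = integral\<^sup>L (density M (\<lambda>x. ennreal (u x))) (\<lambda>x. v ((\<phi> ^^ n) x))"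
    using phm by (simp add: integral_distr)
  also have "\<dots> = (\<integral>x. u x * v ((\<phi> ^^ n) x) \<partial>M)"
    using integral_density[of "\<lambda>x. v ((\<phi> ^^ n) x)" M u] nn by simp
  finally show ?thesis .
qed

end

context pfsys begin

lemma bdd_int:
  fixes w :: "'a \<Rightarrow> real"
  assumes [measurable]: "w \<in> borel_measurable M" and b: "AE x in M. \<bar>w x\<bar> \<le> K"
  shows "integrable M w"
  by (rule Bochner_Integration.integrable_bound[of _ "\<lambda>_. K"]) (use b in \<open>auto elim: AE_mp\<close>)

lemma L1_le_L2:
  fixes w :: "'a \<Rightarrow> real"
  assumes w: "integrable M w" and w2: "integrable M (\<lambda>x. (w x)\<^sup>2)"
    and e: "e > 0" and le: "(\<integral>x. (w x)\<^sup>2 \<partial>M) \<le> e\<^sup>2"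
  shows "(\<integral>x. \<bar>w x\<bar> \<partial>M) \<le> e"
proof -
  have pw: "\<bar>w x\<bar> \<le> (w x)\<^sup>2 / (2 * e) + e / 2" for x
  proof -
    have "0 \<le> (\<bar>w x\<bar> - e)\<^sup>2" by simp
    then have "2 * e * \<bar>w x\<bar> \<le> (w x)\<^sup>2 + e\<^sup>2"
      by (simp add: power2_eq_square algebra_simps)
    then show ?thesis using e by (simp add: field_simps power2_eq_square)
  qed
  have "(\<integral>x. \<bar>w x\<bar> \<partial>M) \<le> (\<integral>x. (w x)\<^sup>2 / (2 * e) + e / 2 \<partial>M)"
    using w w2 pw by (intro integral_mono) auto
  also have "\<dots> = (\<integral>x. (w x)\<^sup>2 \<partial>M) / (2 * e) + e / 2"
    using w2 by (simp add: prob_space)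
  also have "\<dots> \<le> e\<^sup>2 / (2 * e) + e / 2"
    using le e by (intro add_mono divide_right_mono) auto
  also have "\<dots> = e" using e by (simp add: power2_eq_square field_simps)
  finally show ?thesis .
qed

end

locale bfun = pfsys +
  fixes f :: "'a \<Rightarrow> real" and K :: real
  assumes f_int: "integrable M f" and f_nn: "AE x in M. 0 \<le> f x" and f_le: "AE x in M. f x \<le> K"
begin

definition h :: "nat \<Rightarrow> 'a \<Rightarrow> real" where "h n = (P ^^ n) f"

lemma h_int: "integrable M (h n)" unfolding h_def using Pn_int[OF f_int] .
lemma h_meas[measurable]: "h n \<in> borel_measurable M" using h_int by auto
lemma h_nn: "AE x in M. 0 \<le> h n x" unfolding h_def using Pn_nonneg[OF f_int f_nn] .
lemma h_le: "AE x in M. h n x \<le> K" unfolding h_def using Pn_le[OF f_int f_le] .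
lemma h_abs: "AE x in M. \<bar>h n x\<bar> \<le> K" using h_nn[of n] h_le[of n] by eventually_elim auto
lemma h_add: "h (n + k) = (P ^^ k) (h n)" unfolding h_def by (simp add: funpow_add add.commute)

lemma h_phi_abs: "AE x in M. \<bar>h n ((\<phi> ^^ k) x)\<bar> \<le> K"
  using AE_phin[OF h_abs[of n], of k] .

definition a :: "nat \<Rightarrow> real" where "a n = (\<integral>x. (h n x)\<^sup>2 \<partial>M)"

lemma sq_int: "integrable M (\<lambda>x. (h n x)\<^sup>2)"
proof (rule bdd_int[where K="K\<^sup>2"])
  show "AE x in M. \<bar>(h n x)\<^sup>2\<bar> \<le> K\<^sup>2" using h_abs[of n]
    by eventually_elim (metis abs_ge_zero power2_abs power_mono abs_power2)
qed simp

lemma a_diff: "(\<integral>x. (h n x - h (n + k) ((\<phi> ^^ k) x))\<^sup>2 \<partial>M) = a n - a (n + k)"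
proof -
  define v where "v = h (n + k)"
  have v: "v = (P ^^ k) (h n)" unfolding v_def by (rule h_add)
  have [measurable]: "v \<in> borel_measurable M" unfolding v_def by simp
  have vphi: "AE x in M. \<bar>v ((\<phi> ^^ k) x)\<bar> \<le> K" unfolding v_def by (rule h_phi_abs)
  have i1: "integrable M (\<lambda>x. (h n x)\<^sup>2)" by (rule sq_int)
  have i2: "integrable M (\<lambda>x. h n x * v ((\<phi> ^^ k) x))"
  proof (rule bdd_int[where K="K * K"])
    show "AE x in M. \<bar>h n x * v ((\<phi> ^^ k) x)\<bar> \<le> K * K" using h_abs[of n] vphi
      by eventually_elim (simp add: abs_mult mult_mono')
  qed simp
  have i3: "integrable M (\<lambda>x. (v ((\<phi> ^^ k) x))\<^sup>2)"
  proof (rule bdd_int[where K="K * K"])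
    show "AE x in M. \<bar>(v ((\<phi> ^^ k) x))\<^sup>2\<bar> \<le> K * K" using vphi
      by eventually_elim (metis abs_ge_zero abs_mult_self_eq mult_mono' abs_power2 power2_eq_square)
  qed simp
  have "(\<integral>x. (h n x - v ((\<phi> ^^ k) x))\<^sup>2 \<partial>M)
      = (\<integral>x. (h n x)\<^sup>2 - 2 * (h n x * v ((\<phi> ^^ k) x)) + (v ((\<phi> ^^ k) x))\<^sup>2 \<partial>M)"
    by (simp add: power2_diff algebra_simps)
  also have "\<dots> = (\<integral>x. (h n x)\<^sup>2 \<partial>M) - 2 * (\<integral>x. h n x * v ((\<phi> ^^ k) x) \<partial>M) + (\<integral>x. (v ((\<phi> ^^ k) x))\<^sup>2 \<partial>M)"
    using i1 i2 i3 by simp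
  also have "(\<integral>x. h n x * v ((\<phi> ^^ k) x) \<partial>M) = (\<integral>x. v x * v x \<partial>M)"
    using dual[OF h_int[of n] h_nn[of n], where v=v and n=k] v \<open>v \<in> borel_measurable M\<close> by simp
  also have "(\<integral>x. (v ((\<phi> ^^ k) x))\<^sup>2 \<partial>M) = (\<integral>x. (v x)\<^sup>2 \<partial>M)"
    using integral_phin[of "\<lambda>x. (v x)\<^sup>2" k] by simp
  finally show ?thesis unfolding a_def v_def by (simp add: power2_eq_square)
qed

lemma a_nn: "a n \<ge> 0" unfolding a_def by simp

lemma a_mono: "a (n + k) \<le> a n"
proof -
  have "0 \<le> (\<integral>x. (h n x - h (n + k) ((\<phi> ^^ k) x))\<^sup>2 \<partial>M)" by simp
  then show ?thesis using a_diff by simp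
qed

lemma a_decseq: "decseq a"
  unfolding decseq_def using a_mono by (metis le_add_diff_inverse)

end

context pfsys begin

lemma L1_complete:
  fixes u :: "nat \<Rightarrow> 'a \<Rightarrow> real"
  assumes int: "\<And>n. integrable M (u n)"
    and cauchy: "\<And>e. e > 0 \<Longrightarrow> \<exists>N. \<forall>n\<ge>N. \<forall>m\<ge>N. (\<integral>x. \<bar>u n x - u m x\<bar> \<partial>M) < e"
  shows "\<exists>g. integrable M g \<and> (\<lambda>n. \<integral>x. \<bar>u n x - g x\<bar> \<partial>M) \<longlonglongrightarrow> 0"
proof -
  have [measurable]: "\<And>n. u n \<in> borel_measurable M" using int by auto
  have "\<forall>k. \<exists>N. \<forall>n\<ge>N. \<forall>m\<ge>N. (\<integral>x. \<bar>u n x - u m x\<bar> \<partial>M) < (1/2)^k"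
    using cauchy by simp
  then obtain N where N: "\<And>k n m. n \<ge> N k \<Longrightarrow> m \<ge> N k \<Longrightarrow> (\<integral>x. \<bar>u n x - u m x\<bar> \<partial>M) < (1/2)^k"
    by metis
  define r where "r = rec_nat (N 0) (\<lambda>k rk. max (N (Suc k)) (Suc rk))"
  have r0: "r 0 = N 0" and rS: "\<And>k. r (Suc k) = max (N (Suc k)) (Suc (r k))"
    by (simp_all add: r_def)
  have rN: "N k \<le> r k" for k by (cases k) (auto simp: r0 rS)
  have "strict_mono r" unfolding strict_mono_Suc_iff by (auto simp: rS)
  then have rmono: "k \<le> l \<Longrightarrow> r k \<le> r l" for k l by (simp add: strict_mono_less_eq)
  have rcau: "n \<ge> r k \<Longrightarrow> m \<ge> r k \<Longrightarrow> (\<integral>x. \<bar>u n x - u m x\<bar> \<partial>M) < (1/2)^k" for n m k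
    using N[of k n m] rN[of k] by simp
  define w where "w k x = \<bar>u (r (Suc k)) x - u (r k) x\<bar>" for k x
  have [measurable]: "\<And>k. w k \<in> borel_measurable M" unfolding w_def by measurable
  have wint: "integrable M (w k)" for k unfolding w_def using int by simp
  have wle: "(\<integral>x. w k x \<partial>M) \<le> (1/2)^k" for k
    unfolding w_def using rcau[of k "r (Suc k)" "r k"] rmono[of k "Suc k"] by simp
  have "(\<integral>\<^sup>+x. (\<Sum>k. ennreal (w k x)) \<partial>M) = (\<Sum>k. \<integral>\<^sup>+x. ennreal (w k x) \<partial>M)"
    by (rule nn_integral_suminf) simp
  also have "\<dots> = (\<Sum>k. ennreal (\<integral>x. w k x \<partial>M))"
    using wint by (subst nn_integral_eq_integral) (auto simp: w_def)
  also have "\<dots> \<le> (\<Sum>k. ennreal ((1/2)^k))"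
    using wle by (intro suminf_le summableI) (auto intro: ennreal_leI)
  also have "\<dots> = ennreal (\<Sum>k. (1/2)^k)"
    by (rule suminf_ennreal2) (auto intro: summable_geometric)
  also have "\<dots> < \<infinity>" by simp
  finally have fin: "(\<integral>\<^sup>+x. (\<Sum>k. ennreal (w k x)) \<partial>M) \<noteq> \<infinity>" by simp
  have "AE x in M. (\<Sum>k. ennreal (w k x)) \<noteq> \<infinity>"
    by (rule nn_integral_noteq_infinite[OF _ fin]) measurable
  then have conv: "AE x in M. convergent (\<lambda>k. u (r k) x)"
  proof eventually_elim
    fix x assume "(\<Sum>k. ennreal (w k x)) \<noteq> \<infinity>"
    then have "summable (\<lambda>k. w k x)"
      by (intro summable_suminf_not_top) (auto simp: w_def)
    then have "summable (\<lambda>k. u (r (Suc k)) x - u (r k) x)"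
      unfolding w_def by (rule summable_rabs_cancel)
    from summable_LIMSEQ[OF this]
    have "(\<lambda>k. u (r k) x - u (r 0) x) \<longlonglongrightarrow> (\<Sum>k. u (r (Suc k)) x - u (r k) x)"
      by (simp add: sum_lessThan_telescope[of "\<lambda>k. u (r k) x"])
    then have "(\<lambda>k. (u (r k) x - u (r 0) x) + u (r 0) x) \<longlonglongrightarrow> (\<Sum>k. u (r (Suc k)) x - u (r k) x) + u (r 0) x"
      by (intro tendsto_add) auto
    then show "convergent (\<lambda>k. u (r k) x)" unfolding convergent_def by auto
  qed
  define g where "g x = lim (\<lambda>k. u (r k) x)" for x
  have g_meas[measurable]: "g \<in> borel_measurable M" unfolding g_def by measurable
  have glim: "AE x in M. (\<lambda>k. u (r k) x) \<longlonglongrightarrow> g x"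
    using conv by eventually_elim (simp add: g_def convergent_LIMSEQ_iff)
  have bound: "(\<integral>\<^sup>+x. ennreal \<bar>u (r k) x - g x\<bar> \<partial>M) \<le> ennreal ((1/2)^k)" for k
  proof -
    have "(\<integral>\<^sup>+x. ennreal \<bar>u (r k) x - g x\<bar> \<partial>M) = (\<integral>\<^sup>+x. liminf (\<lambda>l. ennreal \<bar>u (r k) x - u (r l) x\<bar>) \<partial>M)"
    proof (rule nn_integral_cong_AE)
      show "AE x in M. ennreal \<bar>u (r k) x - g x\<bar> = liminf (\<lambda>l. ennreal \<bar>u (r k) x - u (r l) x\<bar>)"
        using glim
      proof eventually_elim
        fix x assume "(\<lambda>l. u (r l) x) \<longlonglongrightarrow> g x"
        then have "(\<lambda>l. \<bar>u (r k) x - u (r l) x\<bar>) \<longlonglongrightarrow> \<bar>u (r k) x - g x\<bar>"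
          by (intro tendsto_rabs tendsto_diff) auto
        then have t: "(\<lambda>l. ennreal \<bar>u (r k) x - u (r l) x\<bar>) \<longlonglongrightarrow> ennreal \<bar>u (r k) x - g x\<bar>"
          by (rule tendsto_ennrealI)
        show "ennreal \<bar>u (r k) x - g x\<bar> = liminf (\<lambda>l. ennreal \<bar>u (r k) x - u (r l) x\<bar>)"
          using lim_imp_Liminf[OF trivial_limit_sequentially t] by simp
      qed
    qed
    also have "\<dots> \<le> liminf (\<lambda>l. \<integral>\<^sup>+x. ennreal \<bar>u (r k) x - u (r l) x\<bar> \<partial>M)"
      by (rule nn_integral_liminf) measurable
    also have "\<dots> \<le> ennreal ((1/2)^k)"
    proof (rule Liminf_le)
      show "\<forall>\<^sub>F l in sequentially. (\<integral>\<^sup>+x. ennreal \<bar>u (r k) x - u (r l) x\<bar> \<partial>M) \<le> ennreal ((1/2)^k)"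
        unfolding eventually_sequentially
      proof (intro exI allI impI)
        fix l assume "k \<le> l"
        then have "(\<integral>x. \<bar>u (r k) x - u (r l) x\<bar> \<partial>M) < (1/2)^k"
          using rcau[of k "r k" "r l"] rmono[of k l] by simp
        moreover have "(\<integral>\<^sup>+x. ennreal \<bar>u (r k) x - u (r l) x\<bar> \<partial>M) = ennreal (\<integral>x. \<bar>u (r k) x - u (r l) x\<bar> \<partial>M)"
          using int by (intro nn_integral_eq_integral) auto
        ultimately show "(\<integral>\<^sup>+x. ennreal \<bar>u (r k) x - u (r l) x\<bar> \<partial>M) \<le> ennreal ((1/2)^k)"
          by (auto intro: ennreal_leI)
      qed
    qed simp
    finally show ?thesis .
  qed
  have dint: "integrable M (\<lambda>x. u (r k) x - g x)" for k
  proof (rule integrableI_bounded)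
    show "(\<integral>\<^sup>+x. ennreal (norm (u (r k) x - g x)) \<partial>M) < \<infinity>"
      using bound[of k] by (simp add: le_less_trans)
  qed measurable
  have gint: "integrable M g"
  proof -
    have "integrable M (\<lambda>x. u (r 0) x - (u (r 0) x - g x))"
      by (rule Bochner_Integration.integrable_diff[OF int dint[of 0]])
    then show ?thesis by simp
  qed
  have dle: "(\<integral>x. \<bar>u (r k) x - g x\<bar> \<partial>M) \<le> (1/2)^k" for k
  proof -
    have "ennreal (\<integral>x. \<bar>u (r k) x - g x\<bar> \<partial>M) = (\<integral>\<^sup>+x. ennreal \<bar>u (r k) x - g x\<bar> \<partial>M)"
      using dint[of k] by (intro nn_integral_eq_integral[symmetric]) auto
    then have "ennreal (\<integral>x. \<bar>u (r k) x - g x\<bar> \<partial>M) \<le> ennreal ((1/2)^k)" using bound[of k] by simp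
    then show ?thesis by (simp add: ennreal_le_iff)
  qed
  have "(\<lambda>n. \<integral>x. \<bar>u n x - g x\<bar> \<partial>M) \<longlonglongrightarrow> 0"
  proof (rule LIMSEQ_I)
    fix e :: real assume e: "e > 0"
    obtain k where k: "(1/2::real)^k < e / 2" using real_arch_pow_inv[of "e/2" "1/2"] e by auto
    show "\<exists>no. \<forall>n\<ge>no. norm ((\<integral>x. \<bar>u n x - g x\<bar> \<partial>M) - 0) < e"
    proof (intro exI allI impI)
      fix n assume n: "n \<ge> r k"
      have "(\<integral>x. \<bar>u n x - g x\<bar> \<partial>M) \<le> (\<integral>x. \<bar>u n x - u (r k) x\<bar> + \<bar>u (r k) x - g x\<bar> \<partial>M)"
        using int gint by (intro integral_mono) auto
      also have "\<dots> = (\<integral>x. \<bar>u n x - u (r k) x\<bar> \<partial>M) + (\<integral>x. \<bar>u (r k) x - g x\<bar> \<partial>M)"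
        using int gint by (intro Bochner_Integration.integral_add) auto
      also have "\<dots> < (1/2)^k + (1/2)^k"
        using rcau[of k n "r k"] n dle[of k] by (intro add_less_le_mono) auto
      also have "\<dots> < e" using k by simp
      finally show "norm ((\<integral>x. \<bar>u n x - g x\<bar> \<partial>M) - 0) < e" by simp
    qed
  qed
  then show ?thesis using gint by blast
qed

end

context pfsys begin

definition condii :: bool where
  "condii \<longleftrightarrow> (\<forall>B\<in>sets M. measure M B > 0 \<longrightarrow>
      (\<exists>D\<in>sets M. \<exists>c::real. measure M D > 0 \<and> c > 0 \<and>
        liminf (\<lambda>n. INF A\<in>sets M.
           ereal (measure M ((\<phi> ^^ n) -` A \<inter> space M \<inter> B) - c * measure M (D \<inter> A))) \<ge> 0))"

lemma chain_null:
  assumes ii: condii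
    and B[measurable]: "B \<in> sets M" and C[measurable]: "\<And>k. C k \<in> sets M"
    and rel: "\<And>k. AE x in M. (x \<in> B \<longleftrightarrow> (\<phi> ^^ k) x \<in> C k)"
    and disj: "\<And>k. C k \<inter> C (Suc k) = {}"
  shows "measure M B = 0"
proof (rule ccontr)
  assume "measure M B \<noteq> 0"
  then have "measure M B > 0" using measure_nonneg[of M B] by linarith
  then obtain D c where D[measurable]: "D \<in> sets M" and Dpos: "measure M D > 0" and c: "c > 0"
    and lim: "liminf (\<lambda>n. INF A\<in>sets M.
           ereal (measure M ((\<phi> ^^ n) -` A \<inter> space M \<inter> B) - c * measure M (D \<inter> A))) \<ge> 0"
    using ii B unfolding condii_def by blast
  define e where "e = c * measure M D / 3"
  have e: "e > 0" using c Dpos by (simp add: e_def)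
  have "\<forall>\<^sub>F n in sequentially. ereal (- e) < (INF A\<in>sets M.
           ereal (measure M ((\<phi> ^^ n) -` A \<inter> space M \<inter> B) - c * measure M (D \<inter> A)))"
    using lim unfolding le_Liminf_iff using e by (auto simp: zero_ereal_def)
  then obtain N where N: "\<And>n. n \<ge> N \<Longrightarrow> ereal (- e) < (INF A\<in>sets M.
           ereal (measure M ((\<phi> ^^ n) -` A \<inter> space M \<inter> B) - c * measure M (D \<inter> A)))"
    unfolding eventually_sequentially by blast
  have key: "measure M (D - C n) < e / c" if n: "n \<ge> N" for n
  proof -
    have A[measurable]: "D - C n \<in> sets M" by measurable
    have "ereal (- e) < ereal (measure M ((\<phi> ^^ n) -` (D - C n) \<inter> space M \<inter> B) - c * measure M (D \<inter> (D - C n)))"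
      using N[OF n] A by (rule less_le_trans[OF _ INF_lower])
    then have lt: "- e < measure M ((\<phi> ^^ n) -` (D - C n) \<inter> space M \<inter> B) - c * measure M (D - C n)"
      by (simp add: Int_absorb1 Diff_subset)
    have "measure M ((\<phi> ^^ n) -` (D - C n) \<inter> space M \<inter> B) = measure M ((\<phi> ^^ n) -` ((D - C n) \<inter> C n) \<inter> space M)"
      by (rule measure_eq_AE) (use rel[of n] in \<open>auto elim: AE_mp\<close>)
    also have "\<dots> = 0"
    proof -
      have "(D - C n) \<inter> C n = {}" by auto
      then show ?thesis by simp
    qed
    finally have "- e < - c * measure M (D - C n)" using lt by simp
    then show ?thesis using c by (simp add: field_simps)
  qed
  have "measure M D \<le> measure M ((D - C N) \<union> (D - C (Suc N)))"
    using disj[of N] by (intro finite_measure_mono) auto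
  also have "\<dots> \<le> measure M (D - C N) + measure M (D - C (Suc N))"
    by (intro measure_Un_le) auto
  also have "\<dots> < e / c + e / c" using key[of N] key[of "Suc N"] by simp
  also have "\<dots> = 2 / 3 * measure M D" using c by (simp add: e_def)
  finally show False using Dpos by simp
qed

lemma chain_const:
  assumes ii: condii
    and S[measurable]: "\<And>i. S i \<in> sets M"
    and rel: "\<And>i. AE x in M. (x \<in> S i \<longleftrightarrow> \<phi> x \<in> S (Suc i))"
  shows "AE x in M. (x \<in> S 0 \<longleftrightarrow> x \<in> S 1)"
proof -
  have rel': "AE x in M. \<forall>i. (x \<in> S i \<longleftrightarrow> \<phi> x \<in> S (Suc i))"
    using rel by (simp add: AE_all_countable)
  have iter: "AE x in M. \<forall>i. (x \<in> S i \<longleftrightarrow> (\<phi> ^^ k) x \<in> S (i + k))" for k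
  proof (induction k)
    case 0 then show ?case by simp
  next
    case (Suc k)
    show ?case using Suc AE_phin[OF rel', of k]
      by eventually_elim simp
  qed
  have n0: "measure M (S 0 - S 1) = 0"
  proof (rule chain_null[OF ii, where C="\<lambda>k. S k - S (Suc k)"])
    fix k show "AE x in M. (x \<in> S 0 - S 1 \<longleftrightarrow> (\<phi> ^^ k) x \<in> S k - S (Suc k))"
      using iter[of k] by eventually_elim (metis Diff_iff One_nat_def add_0 plus_1_eq_Suc)
  qed auto
  have n1: "measure M (S 1 - S 0) = 0"
  proof (rule chain_null[OF ii, where C="\<lambda>k. S (Suc k) - S k"])
    fix k show "AE x in M. (x \<in> S 1 - S 0 \<longleftrightarrow> (\<phi> ^^ k) x \<in> S (Suc k) - S k)"
      using iter[of k] by eventually_elim (metis Diff_iff One_nat_def add_0 plus_1_eq_Suc)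
  qed auto
  have z0: "S 0 - S 1 \<in> null_sets M" "S 1 - S 0 \<in> null_sets M"
    using n0 n1 by (auto simp: null_sets_def emeasure_eq_measure)
  have "AE x in M. x \<notin> S 0 - S 1" by (rule AE_not_in[OF z0(1)])
  moreover have "AE x in M. x \<notin> S 1 - S 0" by (rule AE_not_in[OF z0(2)])
  ultimately show ?thesis by eventually_elim auto
qed

end

context pfsys begin
lemma integral_phi:
  fixes w :: "'a \<Rightarrow> real"
  assumes [measurable]: "w \<in> borel_measurable M"
  shows "(\<integral>x. w (\<phi> x) \<partial>M) = (\<integral>x. w x \<partial>M)"
  using integral_phin[of w 1] by simp
end

context bfun begin

definition u :: "nat \<Rightarrow> nat \<Rightarrow> 'a \<Rightarrow> real" where "u j n x = h (n + j) ((\<phi> ^^ n) x)"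

lemma u_meas[measurable]: "u j n \<in> borel_measurable M" unfolding u_def by measurable
lemma u_abs: "AE x in M. \<bar>u j n x\<bar> \<le> K" unfolding u_def by (rule h_phi_abs)
lemma u_int: "integrable M (u j n)" by (rule bdd_int[OF u_meas u_abs])

lemma u_sq:
  assumes "n \<le> m"
  shows "(\<integral>x. (u j n x - u j m x)\<^sup>2 \<partial>M) = a (n + j) - a (m + j)"
proof -
  obtain k where m: "m = n + k" using assms le_iff_add by blast
  have eq: "u j m x = h ((n + j) + k) ((\<phi> ^^ k) ((\<phi> ^^ n) x))" for x
    unfolding u_def m by (simp add: funpow_add add.commute add.left_commute)
  have "(\<integral>x. (u j n x - u j m x)\<^sup>2 \<partial>M) = (\<integral>x. (\<lambda>y. (h (n + j) y - h ((n + j) + k) ((\<phi> ^^ k) y))\<^sup>2) ((\<phi> ^^ n) x) \<partial>M)"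
    unfolding eq by (simp add: u_def)
  also have "\<dots> = (\<integral>y. (h (n + j) y - h ((n + j) + k) ((\<phi> ^^ k) y))\<^sup>2 \<partial>M)"
    by (rule integral_phin) measurable
  also have "\<dots> = a (n + j) - a (m + j)" unfolding a_diff m by (simp add: add.commute add.left_commute)
  finally show ?thesis .
qed

lemma u_L1:
  assumes nm: "n \<le> m" and d: "d > 0" and le: "a (n + j) - a (m + j) \<le> d\<^sup>2"
  shows "(\<integral>x. \<bar>u j n x - u j m x\<bar> \<partial>M) \<le> d"
proof (rule L1_le_L2)
  show "integrable M (\<lambda>x. u j n x - u j m x)" using u_int by simp
  show "integrable M (\<lambda>x. (u j n x - u j m x)\<^sup>2)"
  proof (rule bdd_int[where K="(2*K)\<^sup>2"])
    show "AE x in M. \<bar>(u j n x - u j m x)\<^sup>2\<bar> \<le> (2 * K)\<^sup>2"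
      using u_abs[of j n] u_abs[of j m]
    proof eventually_elim
      fix x assume "\<bar>u j n x\<bar> \<le> K" "\<bar>u j m x\<bar> \<le> K"
      then have "\<bar>u j n x - u j m x\<bar> \<le> 2 * K" by linarith
      then show "\<bar>(u j n x - u j m x)\<^sup>2\<bar> \<le> (2 * K)\<^sup>2"
        by (metis abs_ge_zero power2_abs power_mono abs_power2)
    qed
  qed simp
  show "d > 0" by fact
  show "(\<integral>x. (u j n x - u j m x)\<^sup>2 \<partial>M) \<le> d\<^sup>2" using u_sq[OF nm] le by simp
qed

definition L :: real where "L = lim a"

lemma aL: "a \<longlonglongrightarrow> L" "\<And>i. L \<le> a i"
proof -
  obtain L' where "a \<longlonglongrightarrow> L'" "\<forall>i. L' \<le> a i"
    using decseq_convergent[OF a_decseq, of 0] a_nn by blast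
  moreover then have "L = L'" unfolding L_def by (simp add: limI)
  ultimately show "a \<longlonglongrightarrow> L" "\<And>i. L \<le> a i" by auto
qed

lemma a_close: "d > 0 \<Longrightarrow> \<exists>N. \<forall>n\<ge>N. a n - L < d"
  using aL(1) unfolding LIMSEQ_def dist_real_def by (metis abs_less_iff)

lemma u_cauchy:
  assumes e: "e > 0"
  shows "\<exists>N. \<forall>n\<ge>N. \<forall>m\<ge>N. (\<integral>x. \<bar>u j n x - u j m x\<bar> \<partial>M) < e"
proof -
  obtain N where N: "\<And>n. n \<ge> N \<Longrightarrow> a n - L < (e/2)\<^sup>2" using a_close[of "(e/2)\<^sup>2"] e by auto
  have *: "(\<integral>x. \<bar>u j n x - u j m x\<bar> \<partial>M) \<le> e / 2" if "N \<le> n" "n \<le> m" for n m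
  proof (rule u_L1)
    have "a (n + j) \<le> a N" using a_decseq that(1) by (simp add: decseq_def)
    moreover have "L \<le> a (m + j)" by (rule aL(2))
    ultimately show "a (n + j) - a (m + j) \<le> (e/2)\<^sup>2" using N[of N] by simp
  qed (use that e in auto)
  show ?thesis
  proof (intro exI allI impI)
    fix n m assume "N \<le> n" "N \<le> m"
    show "(\<integral>x. \<bar>u j n x - u j m x\<bar> \<partial>M) < e"
    proof (cases "n \<le> m")
      case True then show ?thesis using *[OF \<open>N \<le> n\<close> True] e by linarith
    next
      case False
      then have "(\<integral>x. \<bar>u j m x - u j n x\<bar> \<partial>M) \<le> e / 2" using *[OF \<open>N \<le> m\<close>, of n] by simp
      then show ?thesis using e by (simp add: abs_minus_commute)
    qed
  qed
qed

definition T :: "nat \<Rightarrow> 'a \<Rightarrow> real" where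
  "T j = (SOME g. integrable M g \<and> (\<lambda>n. \<integral>x. \<bar>u j n x - g x\<bar> \<partial>M) \<longlonglongrightarrow> 0)"

lemma T_prop: "integrable M (T j)" "(\<lambda>n. \<integral>x. \<bar>u j n x - T j x\<bar> \<partial>M) \<longlonglongrightarrow> 0"
proof -
  have "\<exists>g. integrable M g \<and> (\<lambda>n. \<integral>x. \<bar>u j n x - g x\<bar> \<partial>M) \<longlonglongrightarrow> 0"
    by (rule L1_complete[OF u_int u_cauchy])
  then have "integrable M (T j) \<and> (\<lambda>n. \<integral>x. \<bar>u j n x - T j x\<bar> \<partial>M) \<longlonglongrightarrow> 0"
    unfolding T_def by (rule someI_ex)
  then show "integrable M (T j)" "(\<lambda>n. \<integral>x. \<bar>u j n x - T j x\<bar> \<partial>M) \<longlonglongrightarrow> 0" by auto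
qed

lemma T_meas[measurable]: "T j \<in> borel_measurable M" using T_prop(1) by auto

lemma T_shift: "AE x in M. T (Suc j) (\<phi> x) = T j x"
proof -
  define c where "c = (\<integral>x. \<bar>T (Suc j) (\<phi> x) - T j x\<bar> \<partial>M)"
  have i1: "integrable M (\<lambda>x. T (Suc j) (\<phi> x))" using integrable_phin[OF T_prop(1), of "Suc j" 1] by simp
  have ushift: "u j (Suc n) x = u (Suc j) n (\<phi> x)" for n x
    unfolding u_def funpow_Suc_right comp_def by simp
  have bnd: "c \<le> (\<integral>x. \<bar>u (Suc j) n x - T (Suc j) x\<bar> \<partial>M) + (\<integral>x. \<bar>u j (Suc n) x - T j x\<bar> \<partial>M)" for n
  proof -
    have "c \<le> (\<integral>x. \<bar>T (Suc j) (\<phi> x) - u j (Suc n) x\<bar> + \<bar>u j (Suc n) x - T j x\<bar> \<partial>M)"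
      unfolding c_def using i1 T_prop(1) u_int by (intro integral_mono) auto
    also have "\<dots> = (\<integral>x. \<bar>T (Suc j) (\<phi> x) - u j (Suc n) x\<bar> \<partial>M) + (\<integral>x. \<bar>u j (Suc n) x - T j x\<bar> \<partial>M)"
      using i1 T_prop(1) u_int by (intro Bochner_Integration.integral_add) auto
    also have "(\<integral>x. \<bar>T (Suc j) (\<phi> x) - u j (Suc n) x\<bar> \<partial>M) = (\<integral>x. (\<lambda>y. \<bar>u (Suc j) n y - T (Suc j) y\<bar>) (\<phi> x) \<partial>M)"
      unfolding ushift by (simp add: abs_minus_commute)
    also have "\<dots> = (\<integral>x. \<bar>u (Suc j) n x - T (Suc j) x\<bar> \<partial>M)"
      by (rule integral_phi) measurable
    finally show ?thesis .
  qed
  have lim: "(\<lambda>n. (\<integral>x. \<bar>u (Suc j) n x - T (Suc j) x\<bar> \<partial>M) + (\<integral>x. \<bar>u j (Suc n) x - T j x\<bar> \<partial>M)) \<longlonglongrightarrow> 0 + 0"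
    using T_prop(2)[of "Suc j"] LIMSEQ_Suc[OF T_prop(2)[of j]] by (rule tendsto_add)
  have "c \<le> 0" using LIMSEQ_le_const[OF lim] bnd by auto
  moreover have "c \<ge> 0" unfolding c_def by simp
  ultimately have "c = 0" by simp
  then have "AE x in M. \<bar>T (Suc j) (\<phi> x) - T j x\<bar> = 0"
    unfolding c_def using i1 T_prop(1) by (subst (asm) integral_nonneg_eq_0_iff_AE) auto
  then show ?thesis by eventually_elim simp
qed

context assumes ii: condii
begin

lemma T_eq: "AE x in M. T j x = T (Suc j) x"
proof -
  have lvl: "AE x in M. (of_rat q < T j x \<longleftrightarrow> of_rat q < T (Suc j) x)" for q :: rat
  proof -
    define S where "S i = {x \<in> space M. of_rat q < T (j + i) x}" for i
    have S[measurable]: "S i \<in> sets M" for i unfolding S_def by measurable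
    have "AE x in M. (x \<in> S 0 \<longleftrightarrow> x \<in> S 1)"
    proof (rule chain_const[OF ii S])
      fix i show "AE x in M. (x \<in> S i \<longleftrightarrow> \<phi> x \<in> S (Suc i))"
        using T_shift[of "j + i"] AE_space
        by eventually_elim (auto simp: S_def measurable_space[OF phi_meas])
    qed
    then show ?thesis using AE_space by eventually_elim (auto simp: S_def)
  qed
  then have "AE x in M. \<forall>q::rat. (of_rat q < T j x \<longleftrightarrow> of_rat q < T (Suc j) x)"
    by (simp add: AE_all_countable)
  then show ?thesis
  proof eventually_elim
    fix x assume qq: "\<forall>q::rat. (of_rat q < T j x \<longleftrightarrow> of_rat q < T (Suc j) x)"
    show "T j x = T (Suc j) x"
    proof (rule ccontr)
      assume "T j x \<noteq> T (Suc j) x"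
      then consider "T j x < T (Suc j) x" | "T (Suc j) x < T j x" by linarith
      then show False
      proof cases
        case 1
        then obtain r where "r \<in> \<rat>" "T j x < r" "r < T (Suc j) x" using Rats_dense_in_real by blast
        then obtain q where "r = of_rat q" by (auto elim: Rats_cases)
        then show False using qq[rule_format, of q] \<open>T j x < r\<close> \<open>r < T (Suc j) x\<close> by auto
      next
        case 2
        then obtain r where "r \<in> \<rat>" "T (Suc j) x < r" "r < T j x" using Rats_dense_in_real by blast
        then obtain q where "r = of_rat q" by (auto elim: Rats_cases)
        then show False using qq[rule_format, of q] \<open>T (Suc j) x < r\<close> \<open>r < T j x\<close> by auto
      qed
    qed
  qed
qed

lemma T_all: "AE x in M. T n x = T 0 x"
proof (induction n)
  case 0 then show ?case by simp
next
  case (Suc n) then show ?case using T_eq[of n] by eventually_elim simp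
qed

lemma h_T: "(\<lambda>n. \<integral>x. \<bar>h n x - T 0 x\<bar> \<partial>M) \<longlonglongrightarrow> 0"
proof (rule LIMSEQ_I)
  fix e :: real assume e: "e > 0"
  obtain N where N: "\<And>n. n \<ge> N \<Longrightarrow> a n - L < (e/2)\<^sup>2" using a_close[of "(e/2)\<^sup>2"] e by auto
  show "\<exists>no. \<forall>n\<ge>no. norm ((\<integral>x. \<bar>h n x - T 0 x\<bar> \<partial>M) - 0) < e"
  proof (intro exI allI impI)
    fix n assume n: "n \<ge> N"
    have u0: "u n 0 = h n" by (auto simp: u_def)
    have um: "(\<integral>x. \<bar>h n x - u n m x\<bar> \<partial>M) \<le> e / 2" for m
    proof -
      have "(\<integral>x. \<bar>u n 0 x - u n m x\<bar> \<partial>M) \<le> e / 2"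
      proof (rule u_L1)
        show "a (0 + n) - a (m + n) \<le> (e/2)\<^sup>2" using N[OF n] aL(2)[of "m + n"] by simp
      qed (use e in auto)
      then show ?thesis by (simp add: u0)
    qed
    have tri: "(\<integral>x. \<bar>h n x - T n x\<bar> \<partial>M) \<le> e / 2 + (\<integral>x. \<bar>u n m x - T n x\<bar> \<partial>M)" for m
    proof -
      have "(\<integral>x. \<bar>h n x - T n x\<bar> \<partial>M) \<le> (\<integral>x. \<bar>h n x - u n m x\<bar> + \<bar>u n m x - T n x\<bar> \<partial>M)"
        using h_int u_int T_prop(1) by (intro integral_mono) auto
      also have "\<dots> = (\<integral>x. \<bar>h n x - u n m x\<bar> \<partial>M) + (\<integral>x. \<bar>u n m x - T n x\<bar> \<partial>M)"
        using h_int u_int T_prop(1) by (intro Bochner_Integration.integral_add) auto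
      finally show ?thesis using um[of m] by simp
    qed
    have lim: "(\<lambda>m. e / 2 + (\<integral>x. \<bar>u n m x - T n x\<bar> \<partial>M)) \<longlonglongrightarrow> e / 2 + 0"
      by (intro tendsto_add tendsto_const T_prop(2))
    have "(\<integral>x. \<bar>h n x - T n x\<bar> \<partial>M) \<le> e / 2 + 0"
      using LIMSEQ_le_const[OF lim] tri by auto
    moreover have "(\<integral>x. \<bar>h n x - T 0 x\<bar> \<partial>M) = (\<integral>x. \<bar>h n x - T n x\<bar> \<partial>M)"
      using T_all[of n] by (intro integral_cong_AE) (auto elim: AE_mp)
    ultimately show "norm ((\<integral>x. \<bar>h n x - T 0 x\<bar> \<partial>M) - 0) < e" using e by simp
  qed
qed

end
end

context pfsys begin

lemma tri_L1:
  fixes a b c :: "'a \<Rightarrow> real"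
  assumes "integrable M a" "integrable M b" "integrable M c"
  shows "(\<integral>x. \<bar>a x - c x\<bar> \<partial>M) \<le> (\<integral>x. \<bar>a x - b x\<bar> \<partial>M) + (\<integral>x. \<bar>b x - c x\<bar> \<partial>M)"
proof -
  have "(\<integral>x. \<bar>a x - c x\<bar> \<partial>M) \<le> (\<integral>x. \<bar>a x - b x\<bar> + \<bar>b x - c x\<bar> \<partial>M)"
    using assms by (intro integral_mono) auto
  also have "\<dots> = (\<integral>x. \<bar>a x - b x\<bar> \<partial>M) + (\<integral>x. \<bar>b x - c x\<bar> \<partial>M)"
    using assms by (intro Bochner_Integration.integral_add) auto
  finally show ?thesis .
qed

lemma Pn_const: "AE x in M. (P ^^ n) (\<lambda>_. K) x = K"
proof (rule eq_from_sets)
  show "integrable M ((P ^^ n) (\<lambda>_. K))" by (rule Pn_int) simp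
  show "integrable M (\<lambda>_. K)" by simp
  fix A assume A: "A \<in> sets M"
  show "(\<integral>x. indicator A x * (P ^^ n) (\<lambda>_. K) x \<partial>M) = (\<integral>x. indicator A x * K \<partial>M)"
    using Pn_ind[of "\<lambda>_. K" A n] int_ind_const[OF A, of n K] A by simp
qed

context assumes ii: condii
begin

lemma conv_nn:
  assumes f: "integrable M f" and nn: "AE x in M. 0 \<le> f x" and le: "AE x in M. f x \<le> K"
  shows "\<exists>g. integrable M g \<and> (\<lambda>n. \<integral>x. \<bar>(P ^^ n) f x - g x\<bar> \<partial>M) \<longlonglongrightarrow> 0"
proof -
  interpret bfun M \<phi> P f K by unfold_locales (use f nn le in auto)
  show ?thesis using h_T[OF ii] T_prop(1)[of 0] unfolding h_def by blast
qed

lemma conv_bdd: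
  assumes f: "integrable M f" and le: "AE x in M. \<bar>f x\<bar> \<le> K"
  shows "\<exists>g. integrable M g \<and> (\<lambda>n. \<integral>x. \<bar>(P ^^ n) f x - g x\<bar> \<partial>M) \<longlonglongrightarrow> 0"
proof -
  define f' where "f' = (\<lambda>x. f x + K)"
  have f': "integrable M f'" using f by (simp add: f'_def)
  have a1: "AE x in M. 0 \<le> f' x" using le by eventually_elim (auto simp: f'_def)
  have a2: "AE x in M. f' x \<le> 2 * K" using le by eventually_elim (auto simp: f'_def)
  obtain g where g: "integrable M g" "(\<lambda>n. \<integral>x. \<bar>(P ^^ n) f' x - g x\<bar> \<partial>M) \<longlonglongrightarrow> 0"
    using conv_nn[OF f' a1 a2] by blast
  have eq: "(\<integral>x. \<bar>(P ^^ n) f x - (g x - K)\<bar> \<partial>M) = (\<integral>x. \<bar>(P ^^ n) f' x - g x\<bar> \<partial>M)" for n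
  proof (rule integral_cong_AE)
    have [measurable]: "(P ^^ n) f \<in> borel_measurable M" "(P ^^ n) f' \<in> borel_measurable M" "g \<in> borel_measurable M"
      using Pn_int[OF f] Pn_int[OF f'] g(1) by auto
    show "(\<lambda>x. \<bar>(P ^^ n) f x - (g x - K)\<bar>) \<in> borel_measurable M" by measurable
    show "(\<lambda>x. \<bar>(P ^^ n) f' x - g x\<bar>) \<in> borel_measurable M" by measurable
    have fe: "f = (\<lambda>x. f' x - K)" by (auto simp: f'_def)
    have "AE x in M. (P ^^ n) (\<lambda>x. f' x - K) x = (P ^^ n) f' x - (P ^^ n) (\<lambda>_. K) x"
      using Pn_diff[OF f', of "\<lambda>_. K" n] by simp
    then show "AE x in M. \<bar>(P ^^ n) f x - (g x - K)\<bar> = \<bar>(P ^^ n) f' x - g x\<bar>"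
      using Pn_const[of n K] unfolding fe[symmetric] by eventually_elim simp
  qed
  show ?thesis using g eq by (intro exI[of _ "\<lambda>x. g x - K"]) auto
qed

lemma sot: "sot_convergent_L1 M P"
  unfolding sot_convergent_L1_def
proof (intro allI impI)
  fix f :: "'a \<Rightarrow> real" assume f: "integrable M f"
  have [measurable]: "f \<in> borel_measurable M" using f by auto
  define t where "t k x = max (- real k) (min (real k) (f x))" for k x
  have t_meas[measurable]: "t k \<in> borel_measurable M" for k unfolding t_def by measurable
  have t_abs: "\<bar>t k x\<bar> \<le> real k" for k x unfolding t_def by auto
  have t_int: "integrable M (t k)" for k by (rule bdd_int[OF t_meas, of _ "real k"]) (simp add: t_abs)
  have tconv: "(\<lambda>k. \<integral>x. \<bar>f x - t k x\<bar> \<partial>M) \<longlonglongrightarrow> (\<integral>x. 0 \<partial>M)"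
  proof (rule integral_dominated_convergence[where w="\<lambda>x. \<bar>f x\<bar>"])
    show "integrable M (\<lambda>x. \<bar>f x\<bar>)" using f by simp
    show "AE x in M. (\<lambda>k. \<bar>f x - t k x\<bar>) \<longlonglongrightarrow> 0"
    proof (rule AE_I2)
      fix x
      obtain k0 :: nat where "\<bar>f x\<bar> \<le> real k0" using real_arch_simple by blast
      then have "\<forall>k\<ge>k0. \<bar>f x - t k x\<bar> = 0" unfolding t_def by auto
      then show "(\<lambda>k. \<bar>f x - t k x\<bar>) \<longlonglongrightarrow> 0"
        by (intro tendsto_eventually) (auto simp: eventually_sequentially)
    qed
    show "AE x in M. norm \<bar>f x - t k x\<bar> \<le> \<bar>f x\<bar>" for k unfolding t_def by auto
  qed measurable
  have cauchy: "\<exists>N. \<forall>n\<ge>N. \<forall>m\<ge>N. (\<integral>x. \<bar>(P ^^ n) f x - (P ^^ m) f x\<bar> \<partial>M) < e" if e: "e > 0" for e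
  proof -
    have tc: "(\<lambda>k. \<integral>x. \<bar>f x - t k x\<bar> \<partial>M) \<longlonglongrightarrow> 0" using tconv by simp
    have e3: "e / 3 > 0" using e by simp
    obtain k0 where k0: "\<forall>k\<ge>k0. norm ((\<integral>x. \<bar>f x - t k x\<bar> \<partial>M) - 0) < e / 3"
      using LIMSEQ_D[OF tc e3] by blast
    define k where "k = k0"
    have k: "(\<integral>x. \<bar>f x - t k x\<bar> \<partial>M) < e / 3"
    proof -
      have "norm ((\<integral>x. \<bar>f x - t k x\<bar> \<partial>M) - 0) < e / 3" using k0 by (simp add: k_def)
      then show ?thesis by (metis abs_ge_self diff_zero real_norm_def le_less_trans)
    qed
    obtain G where G: "integrable M G" "(\<lambda>n. \<integral>x. \<bar>(P ^^ n) (t k) x - G x\<bar> \<partial>M) \<longlonglongrightarrow> 0"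
      using conv_bdd[OF t_int, of k "real k"] t_abs by auto
    have e6: "e / 6 > 0" using e by simp
    obtain N where N0: "\<forall>n\<ge>N. norm ((\<integral>x. \<bar>(P ^^ n) (t k) x - G x\<bar> \<partial>M) - 0) < e / 6"
      using LIMSEQ_D[OF G(2) e6] by blast
    have N: "(\<integral>x. \<bar>(P ^^ n) (t k) x - G x\<bar> \<partial>M) < e / 6" if "n \<ge> N" for n
    proof -
      have "norm ((\<integral>x. \<bar>(P ^^ n) (t k) x - G x\<bar> \<partial>M) - 0) < e / 6" using N0 that by blast
      then show ?thesis by (metis abs_ge_self diff_zero real_norm_def le_less_trans)
    qed
    have close: "(\<integral>x. \<bar>(P ^^ n) f x - G x\<bar> \<partial>M) < e / 2" if "n \<ge> N" for n
    proof -
      have "(\<integral>x. \<bar>(P ^^ n) f x - G x\<bar> \<partial>M) \<le> (\<integral>x. \<bar>(P ^^ n) f x - (P ^^ n) (t k) x\<bar> \<partial>M) + (\<integral>x. \<bar>(P ^^ n) (t k) x - G x\<bar> \<partial>M)"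
        by (rule tri_L1[OF Pn_int[OF f] Pn_int[OF t_int] G(1)])
      also have "(\<integral>x. \<bar>(P ^^ n) f x - (P ^^ n) (t k) x\<bar> \<partial>M) \<le> (\<integral>x. \<bar>f x - t k x\<bar> \<partial>M)"
        by (rule Pn_contr[OF f t_int])
      finally show ?thesis using k N[OF that] by simp
    qed
    show ?thesis
    proof (intro exI allI impI)
      fix n m assume "n \<ge> N" "m \<ge> N"
      have "(\<integral>x. \<bar>(P ^^ n) f x - (P ^^ m) f x\<bar> \<partial>M) \<le> (\<integral>x. \<bar>(P ^^ n) f x - G x\<bar> \<partial>M) + (\<integral>x. \<bar>G x - (P ^^ m) f x\<bar> \<partial>M)"
        by (rule tri_L1[OF Pn_int[OF f] G(1) Pn_int[OF f]])
      also have "(\<integral>x. \<bar>G x - (P ^^ m) f x\<bar> \<partial>M) = (\<integral>x. \<bar>(P ^^ m) f x - G x\<bar> \<partial>M)"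
        by (simp add: abs_minus_commute)
      finally show "(\<integral>x. \<bar>(P ^^ n) f x - (P ^^ m) f x\<bar> \<partial>M) < e"
        using close[OF \<open>n \<ge> N\<close>] close[OF \<open>m \<ge> N\<close>] by simp
    qed
  qed
  show "\<exists>g. integrable M g \<and> (\<lambda>n. \<integral>x. \<bar>(P ^^ n) f x - g x\<bar> \<partial>M) \<longlonglongrightarrow> 0"
    by (rule L1_complete[OF Pn_int[OF f] cauchy])
qed

end
end

context pfsys begin

lemma sot_imp_ii:
  assumes sot: "sot_convergent_L1 M P"
  shows condii
  unfolding condii_def
proof (intro ballI impI)
  fix B assume B[measurable]: "B \<in> sets M" and Bpos: "measure M B > 0"
  define f :: "'a \<Rightarrow> real" where "f = indicator B"
  have f: "integrable M f" unfolding f_def using integrable_ind[of "\<lambda>_. 1" B] B by simp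
  obtain g where g: "integrable M g" and lim: "(\<lambda>n. \<integral>x. \<bar>(P ^^ n) f x - g x\<bar> \<partial>M) \<longlonglongrightarrow> 0"
    using sot f unfolding sot_convergent_L1_def by blast
  have [measurable]: "g \<in> borel_measurable M" using g by auto
  define eps where "eps n = (\<integral>x. \<bar>(P ^^ n) f x - g x\<bar> \<partial>M)" for n
  have eps_lim: "eps \<longlonglongrightarrow> 0" using lim unfolding eps_def .
  have Pf: "(\<integral>x. indicator A x * (P ^^ n) f x \<partial>M) = measure M ((\<phi> ^^ n) -` A \<inter> space M \<inter> B)"
    if A[measurable]: "A \<in> sets M" for A n
  proof -
    have "(\<integral>x. indicator A x * (P ^^ n) f x \<partial>M) = (\<integral>x. indicator A ((\<phi> ^^ n) x) * f x \<partial>M)"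
      by (rule Pn_ind[OF f A])
    also have "\<dots> = (\<integral>x. indicator ((\<phi> ^^ n) -` A \<inter> space M \<inter> B) x \<partial>M)"
      by (rule Bochner_Integration.integral_cong) (auto simp: f_def indicator_def)
    also have "\<dots> = measure M ((\<phi> ^^ n) -` A \<inter> space M \<inter> B)"
      by (simp add: Int_absorb2 Int_assoc)
    finally show ?thesis .
  qed
  have approx: "(\<integral>x. indicator A x * (P ^^ n) f x \<partial>M) - eps n \<le> (\<integral>x. indicator A x * g x \<partial>M)"
    if A[measurable]: "A \<in> sets M" for A n
  proof -
    have "(\<integral>x. indicator A x * (P ^^ n) f x \<partial>M) - (\<integral>x. indicator A x * g x \<partial>M)
        = (\<integral>x. indicator A x * ((P ^^ n) f x - g x) \<partial>M)"
      using integrable_ind[OF Pn_int[OF f] A, of n] integrable_ind[OF g A]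
      by (simp add: right_diff_distrib)
    also have "\<dots> \<le> eps n" unfolding eps_def
      using integrable_ind[OF Pn_int[OF f] A, of n] integrable_ind[OF g A] Pn_int[OF f] g
      by (intro integral_mono) (auto simp: indicator_def right_diff_distrib)
    finally show ?thesis by simp
  qed
  have approx2: "(\<integral>x. indicator A x * g x \<partial>M) - eps n \<le> (\<integral>x. indicator A x * (P ^^ n) f x \<partial>M)"
    if A[measurable]: "A \<in> sets M" for A n
  proof -
    have "(\<integral>x. indicator A x * g x \<partial>M) - (\<integral>x. indicator A x * (P ^^ n) f x \<partial>M)
        = (\<integral>x. indicator A x * (g x - (P ^^ n) f x) \<partial>M)"
      using integrable_ind[OF Pn_int[OF f] A, of n] integrable_ind[OF g A]
      by (simp add: right_diff_distrib)
    also have "\<dots> \<le> eps n" unfolding eps_def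
      using integrable_ind[OF Pn_int[OF f] A, of n] integrable_ind[OF g A] Pn_int[OF f] g
      by (intro integral_mono) (auto simp: indicator_def right_diff_distrib)
    finally show ?thesis by simp
  qed
  have gnn: "AE x in M. g x \<ge> 0"
  proof (rule nonneg_from_sets[OF g])
    fix A assume A[measurable]: "A \<in> sets M"
    have "(\<lambda>n. - eps n) \<longlonglongrightarrow> - 0" using eps_lim by (rule tendsto_minus)
    moreover have "- eps n \<le> (\<integral>x. indicator A x * g x \<partial>M)" for n
      using approx[OF A, of n] Pf[OF A, of n] measure_nonneg[of M "(\<phi> ^^ n) -` A \<inter> space M \<inter> B"] by linarith
    ultimately show "(\<integral>x. indicator A x * g x \<partial>M) \<ge> 0"
      using LIMSEQ_le_const2[of "\<lambda>n. - eps n" "- 0"] by auto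
  qed
  have gint: "(\<integral>x. g x \<partial>M) \<ge> measure M B"
  proof -
    have "measure M B - eps n \<le> (\<integral>x. g x \<partial>M)" for n
    proof -
      have s1: "(\<phi> ^^ n) -` space M \<inter> space M \<inter> B = B" using phin_space sets.sets_into_space[OF B] by auto
      have s2: "(\<integral>x. indicator (space M) x * g x \<partial>M) = (\<integral>x. g x \<partial>M)"
        by (rule Bochner_Integration.integral_cong) auto
      show ?thesis using approx[of "space M" n] Pf[of "space M" n] unfolding s1 s2 by simp
    qed
    moreover have "(\<lambda>n. measure M B - eps n) \<longlonglongrightarrow> measure M B - 0"
      using eps_lim by (intro tendsto_diff tendsto_const)
    ultimately show ?thesis using LIMSEQ_le_const2[of "\<lambda>n. measure M B - eps n" "measure M B - 0"] by auto
  qed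
  have "\<exists>m::nat. measure M {x \<in> space M. g x \<ge> 1 / Suc m} > 0"
  proof (rule ccontr)
    assume "\<not> ?thesis"
    then have z: "measure M {x \<in> space M. g x \<ge> 1 / Suc m} = 0" for m
      using measure_nonneg[of M] by (metis not_less order.antisym)
    have "AE x in M. x \<notin> {x \<in> space M. g x \<ge> 1 / Suc m}" for m
      by (rule AE_not_in) (use z[of m] in \<open>auto simp: null_sets_def emeasure_eq_measure\<close>)
    then have "AE x in M. \<forall>m. x \<notin> {x \<in> space M. g x \<ge> 1 / Suc m}"
      by (simp add: AE_all_countable)
    then have "AE x in M. g x \<le> 0"
    proof (rule AE_mp, intro AE_I2 impI)
      fix x assume x: "x \<in> space M" "\<forall>m. x \<notin> {x \<in> space M. g x \<ge> 1 / Suc m}"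
      show "g x \<le> 0"
      proof (rule ccontr)
        assume "\<not> g x \<le> 0"
        then obtain n :: nat where "n > 0" "inverse (of_nat n) < g x"
          using ex_inverse_of_nat_less[of "g x"] by auto
        then have "g x \<ge> 1 / Suc (n - 1)" by (simp add: field_simps)
        then show False using x by auto
      qed
    qed
    then have "(\<integral>x. g x \<partial>M) \<le> (\<integral>x. 0 \<partial>M)" by (intro integral_mono_AE g) auto
    then show False using gint Bpos by simp
  qed
  then obtain m :: nat where mpos: "measure M {x \<in> space M. g x \<ge> 1 / Suc m} > 0" by blast
  define c :: real where "c = 1 / Suc m"
  define D where "D = {x \<in> space M. g x \<ge> c}"
  have D[measurable]: "D \<in> sets M" unfolding D_def by measurable
  have c: "c > 0" unfolding c_def by simp
  have Dpos: "measure M D > 0" using mpos unfolding D_def c_def .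
  have bnd: "ereal (- eps n) \<le> (INF A\<in>sets M. ereal (measure M ((\<phi> ^^ n) -` A \<inter> space M \<inter> B) - c * measure M (D \<inter> A)))" for n
  proof (rule INF_greatest)
    fix A assume A[measurable]: "A \<in> sets M"
    have "c * measure M (D \<inter> A) = (\<integral>x. indicator A x * (c * indicator D x) \<partial>M)"
    proof -
      have "(\<integral>x. indicator A x * (c * indicator D x) \<partial>M) = (\<integral>x. c * indicator (D \<inter> A) x \<partial>M)"
        by (rule Bochner_Integration.integral_cong) (auto simp: indicator_def)
      also have "\<dots> = c * measure M (D \<inter> A)" by (simp add: Int_absorb2)
      finally show ?thesis by simp
    qed
    also have "\<dots> \<le> (\<integral>x. indicator A x * g x \<partial>M)"
    proof (rule integral_mono_AE)
      show "integrable M (\<lambda>x. indicator A x * (c * indicator D x))"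
      proof -
        have iD: "integrable M (indicator D :: 'a \<Rightarrow> real)" using integrable_ind[of "\<lambda>_. 1" D] D by simp
        show ?thesis using integrable_ind[of "\<lambda>x. c * indicator D x" A] A iD by simp
      qed
      show "integrable M (\<lambda>x. indicator A x * g x)" using integrable_ind[OF g A] .
      show "AE x in M. indicator A x * (c * indicator D x) \<le> indicator A x * g x"
        using gnn AE_space by eventually_elim (auto simp: indicator_def D_def)
    qed
    finally have "c * measure M (D \<inter> A) \<le> (\<integral>x. indicator A x * g x \<partial>M)" .
    then show "ereal (- eps n) \<le> ereal (measure M ((\<phi> ^^ n) -` A \<inter> space M \<inter> B) - c * measure M (D \<inter> A))"
      using approx2[OF A, of n] Pf[OF A, of n] by simp
  qed
  have "liminf (\<lambda>n. ereal (- eps n)) = 0"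
  proof -
    have t: "(\<lambda>n. ereal (- eps n)) \<longlonglongrightarrow> ereal (- 0)"
      using eps_lim by (intro tendsto_ereal tendsto_minus)
    have "liminf (\<lambda>n. ereal (- eps n)) = ereal (- 0)"
      by (rule lim_imp_Liminf[OF trivial_limit_sequentially t])
    then show ?thesis by (simp add: zero_ereal_def)
  qed
  moreover have "liminf (\<lambda>n. ereal (- eps n)) \<le> liminf (\<lambda>n. INF A\<in>sets M. ereal (measure M ((\<phi> ^^ n) -` A \<inter> space M \<inter> B) - c * measure M (D \<inter> A)))"
    by (rule Liminf_mono) (use bnd in auto)
  ultimately show "\<exists>D\<in>sets M. \<exists>c::real. measure M D > 0 \<and> c > 0 \<and>
        liminf (\<lambda>n. INF A\<in>sets M.
           ereal (measure M ((\<phi> ^^ n) -` A \<inter> space M \<inter> B) - c * measure M (D \<inter> A))) \<ge> 0"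
    using D Dpos c by auto
qed

end

theorem proposition2p1:
  fixes M :: "'a measure" and \<phi> :: "'a \<Rightarrow> 'a" and P :: "('a \<Rightarrow> real) \<Rightarrow> ('a \<Rightarrow> real)"
  assumes "mpds M \<phi>" and "perron_frobenius M \<phi> P"
  shows "sot_convergent_L1 M P \<longleftrightarrow>
    (\<forall>B\<in>sets M. measure M B > 0 \<longrightarrow>
      (\<exists>D\<in>sets M. \<exists>c::real. measure M D > 0 \<and> c > 0 \<and>
        liminf (\<lambda>n. INF A\<in>sets M.
           ereal (measure M ((\<phi> ^^ n) -` A \<inter> space M \<inter> B) - c * measure M (D \<inter> A))) \<ge> 0))"
proof -
  interpret pfsys M \<phi> P using assms by unfold_locales
  show ?thesis using sot sot_imp_ii unfolding condii_def by blast
qed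

end
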